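(* Let $C$ be a binary linear self-dual code of length $n$, let $i\in\{1,\dots,n\}$ be a coordinate position, and for $\delta\in\{0,1\}$ and $0\le k\le n$ let $$A_{k,\delta}=\left|\{v\in C : wt(v)=k,\ v[i]=\delta\}\right|.$$ Let $A_k$ be the number of codewords of $C$ of Hamming weight $k$ and $\rho=\sqrt2-1$. Then $$\sum_{k=0}^{n}A_{k,1}\rho^{k-1}=\sum_{k=0}^{n}A_{k,0}\rho^{k+1}\qquad\text{and}\qquad \sum_{k=0}^{n}A_{k,1}\rho^{k-1}=\frac{1+\rho}{4}\sum_{k=0}^{n}A_k\rho^{k}.$$ In particular, $\sum_{k=0}^{n}A_{k,1}\rho^{k-1}$ does not depend on the choice of the coordinate $i$.
   Context: A binary linear self-dual code $C$ of length $n$ is a linear subspace of $F^n$, $F=\{0,1\}$ the binary field, of dimension $n/2$ equal to its orthogonal complement under the standard dot product. $wt(v)$ denotes Hamming weight and $v[i]$ the $i$-th coordinate of $v$. *)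

theory Defs
  imports "HOL-Analysis.Analysis"
begin

text \<open>Binary vectors of length n are modelled as functions nat => bool that are
False outside {0..<n} (True = 1). Coordinates are indexed 0..n-1.\<close>

definition bvecs :: "nat \<Rightarrow> (nat \<Rightarrow> bool) set" where
  "bvecs n = {v. \<forall>j. n \<le> j \<longrightarrow> \<not> v j}"

definition bzero :: "nat \<Rightarrow> bool" where
  "bzero = (\<lambda>_. False)"

definition badd :: "(nat \<Rightarrow> bool) \<Rightarrow> (nat \<Rightarrow> bool) \<Rightarrow> (nat \<Rightarrow> bool)" where
  "badd u v = (\<lambda>j. u j \<noteq> v j)"

definition wt :: "nat \<Rightarrow> (nat \<Rightarrow> bool) \<Rightarrow> nat" where
  "wt n v = card {j. j < n \<and> v j}"

definition bdot :: "nat \<Rightarrow> (nat \<Rightarrow> bool) \<Rightarrow> (nat \<Rightarrow> bool) \<Rightarrow> bool" where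
  "bdot n u v = odd (card {j. j < n \<and> u j \<and> v j})"

text \<open>Linear code (subspace of F^n over the binary field: contains 0, closed under +;
scalar multiples are 0 or the vector itself).\<close>
definition binary_linear_code :: "nat \<Rightarrow> (nat \<Rightarrow> bool) set \<Rightarrow> bool" where
  "binary_linear_code n C \<longleftrightarrow> C \<subseteq> bvecs n \<and> bzero \<in> C \<and>
     (\<forall>u\<in>C. \<forall>v\<in>C. badd u v \<in> C)"

definition dual_code :: "nat \<Rightarrow> (nat \<Rightarrow> bool) set \<Rightarrow> (nat \<Rightarrow> bool) set" where
  "dual_code n C = {u \<in> bvecs n. \<forall>v\<in>C. \<not> bdot n u v}"

definition self_dual :: "nat \<Rightarrow> (nat \<Rightarrow> bool) set \<Rightarrow> bool" where
  "self_dual n C \<longleftrightarrow> binary_linear_code n C \<and> C = dual_code n C"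

definition A_cnt :: "nat \<Rightarrow> (nat \<Rightarrow> bool) set \<Rightarrow> nat \<Rightarrow> nat" where
  "A_cnt n C k = card {v \<in> C. wt n v = k}"

definition A_pos :: "nat \<Rightarrow> (nat \<Rightarrow> bool) set \<Rightarrow> nat \<Rightarrow> nat \<Rightarrow> bool \<Rightarrow> nat" where
  "A_pos n C i k \<delta> = card {v \<in> C. wt n v = k \<and> v i = \<delta>}"

end

theory Submission
  imports Defs
begin

lemma bvecs_image: "bvecs n = (\<lambda>S j. j \<in> S) ` Pow {..<n}"
proof
  show "bvecs n \<subseteq> (\<lambda>S j. j \<in> S) ` Pow {..<n}"
  proof
    fix v assume "v \<in> bvecs n"
    hence "{j. v j} \<in> Pow {..<n}" unfolding bvecs_def by (auto simp: not_le[symmetric])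
    moreover have "v = (\<lambda>j. j \<in> {j. v j})" by auto
    ultimately show "v \<in> (\<lambda>S j. j \<in> S) ` Pow {..<n}" by blast
  qed
  show "(\<lambda>S j. j \<in> S) ` Pow {..<n} \<subseteq> bvecs n" unfolding bvecs_def by auto
qed

lemma finite_bvecs: "finite (bvecs n)"
  unfolding bvecs_image by simp

lemma sum_bvecs_prod:
  fixes h :: "nat \<Rightarrow> bool \<Rightarrow> real"
  shows "(\<Sum>w\<in>bvecs n. \<Prod>j<n. h j (w j)) = (\<Prod>j<n. h j False + h j True)"
proof -
  have inj: "inj_on (\<lambda>S j. j \<in> S) (Pow {..<n})"
    by (auto simp: inj_on_def fun_eq_iff set_eq_iff)
  have "(\<Sum>w\<in>bvecs n. \<Prod>j<n. h j (w j)) = (\<Sum>S\<in>Pow {..<n}. \<Prod>j<n. h j (j \<in> S))"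
    unfolding bvecs_image by (simp add: sum.reindex[OF inj])
  also have "\<dots> = (\<Sum>S\<in>Pow {..<n}. (\<Prod>j\<in>S. h j True) * (\<Prod>j\<in>{..<n}-S. h j False))"
  proof (rule sum.cong[OF refl])
    fix S assume S: "S \<in> Pow {..<n}"
    have "(\<Prod>j<n. h j (j \<in> S)) = (\<Prod>j<n. if j \<in> S then h j True else h j False)"
      by (rule prod.cong) auto
    also have "\<dots> = (\<Prod>j\<in>{..<n} \<inter> {j. j \<in> S}. h j True) * (\<Prod>j\<in>{..<n} \<inter> - {j. j \<in> S}. h j False)"
      by (rule prod.If_cases) simp
    also have "{..<n} \<inter> {j. j \<in> S} = S" using S by auto
    also have "{..<n} \<inter> - {j. j \<in> S} = {..<n} - S" by auto
    finally show "(\<Prod>j<n. h j (j \<in> S)) = (\<Prod>j\<in>S. h j True) * (\<Prod>j\<in>{..<n}-S. h j False)" .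
  qed
  also have "\<dots> = (\<Prod>j<n. h j True + h j False)"
    by (rule prod_add[symmetric]) simp
  finally show ?thesis by (simp add: add.commute)
qed

definition esign :: "nat \<Rightarrow> (nat \<Rightarrow> bool) \<Rightarrow> (nat \<Rightarrow> bool) \<Rightarrow> real" where
  "esign n v w = (if bdot n v w then -1 else 1)"

lemma esign_prod: "esign n v w = (\<Prod>j<n. if v j \<and> w j then -1 else (1::real))"
proof -
  have "(\<Prod>j<n. if v j \<and> w j then -1 else (1::real))
     = (\<Prod>j\<in>{..<n} \<inter> {j. v j \<and> w j}. -1) * (\<Prod>j\<in>{..<n} \<inter> - {j. v j \<and> w j}. 1)"
    by (rule prod.If_cases) simp
  also have "\<dots> = (-1) ^ card {j. j < n \<and> v j \<and> w j}"
    by (simp add: Int_def conj_commute)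
  finally show ?thesis unfolding esign_def bdot_def by (simp add: minus_one_power_iff)
qed

lemma card_sym_diff_parity:
  assumes "finite A" "finite B"
  shows "odd (card ((A - B) \<union> (B - A))) \<longleftrightarrow> (odd (card A) \<noteq> odd (card B))"
proof -
  have d: "card ((A - B) \<union> (B - A)) = card (A - B) + card (B - A)"
    by (rule card_Un_disjoint) (use assms in auto)
  have a: "card A = card (A - B) + card (A \<inter> B)"
    using assms card_Diff_subset_Int[of A B] card_mono[of A "A \<inter> B"] by auto
  have b: "card B = card (B - A) + card (A \<inter> B)"
    using assms card_Diff_subset_Int[of B A] card_mono[of B "A \<inter> B"] by (auto simp: Int_commute)
  show ?thesis using d a b by auto
qed



lemma bdot_sym: "bdot n u v = bdot n v u"
  unfolding bdot_def by (simp add: conj_commute)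

lemma bdot_badd: "bdot n (badd v v0) w = (bdot n v w \<noteq> bdot n v0 w)"
proof -
  let ?A = "{j. j < n \<and> v j \<and> w j}" and ?B = "{j. j < n \<and> v0 j \<and> w j}"
  have "{j. j < n \<and> badd v v0 j \<and> w j} = (?A - ?B) \<union> (?B - ?A)"
    unfolding badd_def by auto
  moreover have "finite ?A" "finite ?B" by auto
  ultimately show ?thesis unfolding bdot_def using card_sym_diff_parity[of ?A ?B] by simp
qed

lemma badd_badd: "badd (badd v u) u = v"
  unfolding badd_def by auto

lemma char_sum:
  assumes sd: "self_dual n C" and w: "w \<in> bvecs n"
  shows "(\<Sum>v\<in>C. esign n v w) = (if w \<in> C then real (card C) else 0)"
proof (cases "w \<in> C")
  case True
  hence "w \<in> dual_code n C" using sd unfolding self_dual_def by auto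
  hence "\<forall>v\<in>C. esign n v w = 1" unfolding dual_code_def esign_def by (auto simp: bdot_sym)
  thus ?thesis using True by simp
next
  case False
  have lin: "binary_linear_code n C" and eq: "C = dual_code n C" using sd unfolding self_dual_def by auto
  from False w eq obtain v0 where v0: "v0 \<in> C" "bdot n w v0" unfolding dual_code_def by auto
  have cl: "\<And>v. v \<in> C \<Longrightarrow> badd v v0 \<in> C" using lin v0 unfolding binary_linear_code_def by auto
  have "(\<Sum>v\<in>C. esign n v w) = (\<Sum>v\<in>C. esign n (badd v v0) w)"
    by (rule sum.reindex_bij_witness[where i="\<lambda>v. badd v v0" and j="\<lambda>v. badd v v0"])
       (auto simp: badd_badd cl)
  also have "\<dots> = (\<Sum>v\<in>C. - esign n v w)"
    using v0 bdot_sym[of n w v0] by (intro sum.cong) (auto simp: esign_def bdot_badd)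
  finally have "(\<Sum>v\<in>C. esign n v w) = 0" by (simp add: sum_negf)
  thus ?thesis using False by simp
qed

lemma finite_code: "self_dual n C \<Longrightarrow> finite C"
  unfolding self_dual_def binary_linear_code_def using finite_bvecs finite_subset by blast

lemma macwilliams:
  fixes g :: "nat \<Rightarrow> bool \<Rightarrow> real"
  assumes sd: "self_dual n C"
  shows "real (card C) * (\<Sum>w\<in>C. \<Prod>j<n. g j (w j))
       = (\<Sum>v\<in>C. \<Prod>j<n. g j False + (if v j then -1 else 1) * g j True)"
proof -
  have fC: "finite C" using finite_code[OF sd] .
  have sub: "C \<subseteq> bvecs n" using sd unfolding self_dual_def binary_linear_code_def by auto
  have "(\<Sum>v\<in>C. \<Prod>j<n. g j False + (if v j then -1 else 1) * g j True)
      = (\<Sum>v\<in>C. \<Sum>w\<in>bvecs n. \<Prod>j<n. (if v j \<and> w j then -1 else 1) * g j (w j))"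
  proof (rule sum.cong[OF refl])
    fix v
    show "(\<Prod>j<n. g j False + (if v j then -1 else 1) * g j True)
      = (\<Sum>w\<in>bvecs n. \<Prod>j<n. (if v j \<and> w j then -1 else 1) * g j (w j))"
      using sum_bvecs_prod[of "\<lambda>j x. (if v j \<and> x then -1 else 1) * g j x" n] by simp
  qed
  also have "\<dots> = (\<Sum>v\<in>C. \<Sum>w\<in>bvecs n. esign n v w * (\<Prod>j<n. g j (w j)))"
    by (simp add: esign_prod prod.distrib)
  also have "\<dots> = (\<Sum>w\<in>bvecs n. (\<Sum>v\<in>C. esign n v w) * (\<Prod>j<n. g j (w j)))"
    by (subst sum.swap) (simp add: sum_distrib_right)
  also have "\<dots> = (\<Sum>w\<in>bvecs n. (if w \<in> C then real (card C) * (\<Prod>j<n. g j (w j)) else 0))"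
    by (rule sum.cong) (auto simp: char_sum[OF sd])
  also have "\<dots> = (\<Sum>w\<in>C. real (card C) * (\<Prod>j<n. g j (w j)))"
    using sum.inter_restrict[OF finite_bvecs[of n], of "\<lambda>w. real (card C) * (\<Prod>j<n. g j (w j))" C] sub
    by (simp add: Int_absorb1)
  finally show ?thesis by (simp add: sum_distrib_left)
qed


lemma group_count:
  fixes h :: "nat \<Rightarrow> real"
  assumes "finite S" "finite K" "\<And>v. v \<in> S \<Longrightarrow> g v \<in> K"
  shows "(\<Sum>k\<in>K. real (card {v\<in>S. g v = k}) * h k) = (\<Sum>v\<in>S. h (g v))"
proof -
  have "g ` S \<subseteq> K" using assms(3) by auto
  from sum.group[OF assms(1,2) this, of "\<lambda>v. h (g v)"] show ?thesis by simp
qed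

lemma wt_le: "wt n v \<le> n"
  unfolding wt_def using card_mono[of "{..<n}" "{j. j < n \<and> v j}"] by auto

lemma rho_facts:
  fixes \<rho> :: real
  assumes "\<rho> = sqrt 2 - 1"
  shows "\<rho> > 0" "1 - \<rho> = (1 + \<rho>) * \<rho>" "(1 + \<rho>) * (1 + \<rho>^2) = 4 * \<rho>"
proof -
  have s: "sqrt 2 * sqrt 2 = (2::real)" by simp
  have "sqrt 2 > (1::real)" by (simp add: real_less_rsqrt)
  thus "\<rho> > 0" using assms by simp
  show "1 - \<rho> = (1 + \<rho>) * \<rho>" using s unfolding assms by (simp add: algebra_simps)
  show "(1 + \<rho>) * (1 + \<rho>^2) = 4 * \<rho>" using s unfolding assms by (simp add: algebra_simps power2_eq_square)
qed


lemma split_sum: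
  fixes f :: "(nat \<Rightarrow> bool) \<Rightarrow> real"
  assumes "finite C"
  shows "(\<Sum>v\<in>C. (if v i then b else a) * f v)
       = a * (\<Sum>v\<in>{v\<in>C. \<not> v i}. f v) + b * (\<Sum>v\<in>{v\<in>C. v i}. f v)"
proof -
  have "(\<Sum>v\<in>C. (if v i then b else a) * f v) = (\<Sum>v\<in>C. if v i then b * f v else a * f v)"
    by (rule sum.cong) auto
  also have "\<dots> = (\<Sum>v\<in>C \<inter> {v. v i}. b * f v) + (\<Sum>v\<in>C \<inter> - {v. v i}. a * f v)"
    by (rule sum.If_cases[OF assms])
  also have "C \<inter> {v. v i} = {v\<in>C. v i}" by auto
  also have "C \<inter> - {v. v i} = {v\<in>C. \<not> v i}" by auto
  finally show ?thesis by (simp add: sum_distrib_left)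
qed

lemma split_identity:
  fixes \<rho> a b :: real
  assumes sd: "self_dual n C" and i: "i < n" and r: "\<rho> = sqrt 2 - 1"
  shows "real (card C) * (a * (\<Sum>v\<in>{v\<in>C. \<not> v i}. \<Prod>j\<in>{..<n}-{i}. if v j then \<rho> else 1)
                         + b * (\<Sum>v\<in>{v\<in>C. v i}. \<Prod>j\<in>{..<n}-{i}. if v j then \<rho> else 1))
       = (1 + \<rho>) ^ (n - 1) * ((a + b) * (\<Sum>v\<in>{v\<in>C. \<not> v i}. \<Prod>j\<in>{..<n}-{i}. if v j then \<rho> else 1)
                         + (a - b) * (\<Sum>v\<in>{v\<in>C. v i}. \<Prod>j\<in>{..<n}-{i}. if v j then \<rho> else 1))"
proof -
  define P where "P = (\<lambda>v. \<Prod>j\<in>{..<n}-{i}. if v j then \<rho> else (1::real))"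
  define g where "g = (\<lambda>j x. if j = i then (if x then b else a) else (if x then \<rho> else (1::real)))"
  have fC: "finite C" using finite_code[OF sd] .
  have iin: "i \<in> {..<n}" using i by simp
  have card: "card ({..<n} - {i}) = n - 1" using i by simp
  have rf: "1 - \<rho> = (1 + \<rho>) * \<rho>" using rho_facts[OF r] by simp
  have L: "(\<Prod>j<n. g j (w j)) = (if w i then b else a) * P w" for w
  proof -
    have "(\<Prod>j<n. g j (w j)) = g i (w i) * (\<Prod>j\<in>{..<n}-{i}. g j (w j))"
      by (rule prod.remove[OF _ iin]) simp
    also have "(\<Prod>j\<in>{..<n}-{i}. g j (w j)) = P w"
      unfolding P_def g_def by (rule prod.cong) auto
    finally show ?thesis unfolding g_def by simp
  qed
  have R: "(\<Prod>j<n. g j False + (if v j then -1 else 1) * g j True)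
         = (a + (if v i then -1 else 1) * b) * ((1 + \<rho>) ^ (n - 1) * P v)" for v
  proof -
    have "(\<Prod>j<n. g j False + (if v j then -1 else 1) * g j True)
        = (g i False + (if v i then -1 else 1) * g i True) *
          (\<Prod>j\<in>{..<n}-{i}. g j False + (if v j then -1 else 1) * g j True)"
      by (rule prod.remove[OF _ iin]) simp
    also have "(\<Prod>j\<in>{..<n}-{i}. g j False + (if v j then -1 else 1) * g j True)
        = (\<Prod>j\<in>{..<n}-{i}. (1 + \<rho>) * (if v j then \<rho> else 1))"
      unfolding g_def using rf by (intro prod.cong) auto
    also have "\<dots> = (1 + \<rho>) ^ (n - 1) * P v"
      unfolding P_def by (simp add: prod.distrib card)
    finally show ?thesis unfolding g_def by simp
  qed
  have "real (card C) * (\<Sum>w\<in>C. (if w i then b else a) * P w)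
      = (\<Sum>v\<in>C. (if v i then a - b else a + b) * ((1 + \<rho>) ^ (n - 1) * P v))"
  proof -
    have "real (card C) * (\<Sum>w\<in>C. (if w i then b else a) * P w)
        = (\<Sum>v\<in>C. (a + (if v i then -1 else 1) * b) * ((1 + \<rho>) ^ (n - 1) * P v))"
      using macwilliams[OF sd, of g] by (simp only: L R)
    also have "\<dots> = (\<Sum>v\<in>C. (if v i then a - b else a + b) * ((1 + \<rho>) ^ (n - 1) * P v))"
      by (rule sum.cong) auto
    finally show ?thesis .
  qed
  also have "\<dots> = (1 + \<rho>) ^ (n - 1) * (\<Sum>v\<in>C. (if v i then a - b else a + b) * P v)"
    by (simp add: sum_distrib_left mult_ac)
  finally show ?thesis using split_sum[OF fC, of i b a P] split_sum[OF fC, of i "a - b" "a + b" P]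
    unfolding P_def by simp
qed


lemma wt_split:
  assumes "i < n"
  shows "wt n v = card (({..<n}-{i}) \<inter> {j. v j}) + (if v i then 1 else 0)"
proof (cases "v i")
  case True
  have "{j. j < n \<and> v j} = insert i (({..<n}-{i}) \<inter> {j. v j})" using True assms by auto
  thus ?thesis unfolding wt_def using True by simp
next
  case False
  have "{j. j < n \<and> v j} = ({..<n}-{i}) \<inter> {j. v j}" using False assms by auto
  thus ?thesis unfolding wt_def using False by simp
qed

lemma P_pow:
  fixes \<rho> :: real and v :: "nat \<Rightarrow> bool"
  shows "(\<Prod>j\<in>{..<n}-{i}. if v j then \<rho> else 1) = \<rho> ^ card (({..<n}-{i}) \<inter> {j. v j})"
proof -
  have "(\<Prod>j\<in>{..<n}-{i}. if v j then \<rho> else 1)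
     = (\<Prod>j\<in>({..<n}-{i}) \<inter> {j. v j}. \<rho>) * (\<Prod>j\<in>({..<n}-{i}) \<inter> - {j. v j}. 1)"
    by (rule prod.If_cases) simp
  thus ?thesis by simp
qed

theorem theorem7:
  fixes n :: nat and C :: "(nat \<Rightarrow> bool) set" and i :: nat and \<rho> :: real
  assumes "self_dual n C"
    and "i < n"
    and "\<rho> = sqrt 2 - 1"
  shows "(\<Sum>k=0..n. real (A_pos n C i k True) * \<rho> powi (int k - 1))
           = (\<Sum>k=0..n. real (A_pos n C i k False) * \<rho> ^ (k + 1))
       \<and> (\<Sum>k=0..n. real (A_pos n C i k True) * \<rho> powi (int k - 1))
           = (1 + \<rho>) / 4 * (\<Sum>k=0..n. real (A_cnt n C k) * \<rho> ^ k)"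
proof -
  note sd = assms(1) and i = assms(2) and r = assms(3)
  define P where "P = (\<lambda>v. \<Prod>j\<in>{..<n}-{i}. if v j then \<rho> else (1::real))"
  define X where "X = (\<Sum>v\<in>{v\<in>C. \<not> v i}. P v)"
  define Y where "Y = (\<Sum>v\<in>{v\<in>C. v i}. P v)"
  define c where "c = real (card C)"
  define K where "K = (1 + \<rho>) ^ (n - 1)"
  have fC: "finite C" using finite_code[OF sd] .
  have rpos: "\<rho> > 0" and rf: "(1 + \<rho>) * (1 + \<rho>^2) = 4 * \<rho>" using rho_facts[OF r] by auto
  have P_nn: "P v \<ge> 0" for v unfolding P_def using rpos by (intro prod_nonneg) auto
  have z: "bzero \<in> C" using sd unfolding self_dual_def binary_linear_code_def by auto
  have P0: "P bzero = 1" unfolding P_def bzero_def by simp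
  have X1: "X \<ge> 1"
  proof -
    have "P bzero \<le> X" unfolding X_def
      by (rule member_le_sum) (use z fC P_nn in \<open>auto simp: bzero_def\<close>)
    thus ?thesis using P0 by simp
  qed
  have Y0: "Y \<ge> 0" unfolding Y_def using P_nn by (intro sum_nonneg) auto
  have cpos: "c > 0" unfolding c_def using z fC card_gt_0_iff by auto
  have Kpos: "K > 0" unfolding K_def using rpos by simp
  have e1: "c * X = K * (X + Y)"
    using split_identity[OF sd i r, of 1 0] unfolding c_def K_def X_def Y_def P_def by simp
  have e2: "c * Y = K * (X - Y)"
    using split_identity[OF sd i r, of 0 1] unfolding c_def K_def X_def Y_def P_def by simp
  have h1: "c * X * (X - Y) = K * (X + Y) * (X - Y)" using e1 by simp
  have h2: "c * Y * (X + Y) = K * (X - Y) * (X + Y)" using e2 by simp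
  have "c * X * (X - Y) = c * Y * (X + Y)" by (subst h1, subst h2) (simp add: mult_ac)
  hence "c * (X * (X - Y)) = c * (Y * (X + Y))" by (simp only: mult.assoc)
  hence q: "X * (X - Y) = Y * (X + Y)" using cpos by simp
  have "(Y + X)^2 = 2 * X^2" using q by (simp add: algebra_simps power2_eq_square)
  hence "sqrt ((Y + X)^2) = sqrt 2 * X" using X1 by (simp add: real_sqrt_mult)
  hence "Y + X = sqrt 2 * X" using X1 Y0 by simp
  hence YX: "Y = \<rho> * X" unfolding r by (simp add: algebra_simps)
  have wtle: "\<And>v. wt n v \<in> {0..n}" using wt_le by auto
  have L1: "(\<Sum>k=0..n. real (A_pos n C i k True) * \<rho> powi (int k - 1)) = Y"
  proof -
    have "(\<Sum>k=0..n. real (A_pos n C i k True) * \<rho> powi (int k - 1))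
        = (\<Sum>k=0..n. real (card {v\<in>{v\<in>C. v i}. wt n v = k}) * \<rho> powi (int k - 1))"
      unfolding A_pos_def by (intro sum.cong refl arg_cong[where f="\<lambda>x. real (card x) * _"]) auto
    also have "\<dots> = (\<Sum>v\<in>{v\<in>C. v i}. \<rho> powi (int (wt n v) - 1))"
      by (rule group_count) (use fC wtle in auto)
    also have "\<dots> = Y" unfolding Y_def P_def
      by (intro sum.cong refl) (simp add: wt_split[OF i] P_pow)
    finally show ?thesis .
  qed
  have R1: "(\<Sum>k=0..n. real (A_pos n C i k False) * \<rho> ^ (k + 1)) = \<rho> * X"
  proof -
    have "(\<Sum>k=0..n. real (A_pos n C i k False) * \<rho> ^ (k + 1))
        = (\<Sum>k=0..n. real (card {v\<in>{v\<in>C. \<not> v i}. wt n v = k}) * \<rho> ^ (k + 1))"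
      unfolding A_pos_def by (intro sum.cong refl arg_cong[where f="\<lambda>x. real (card x) * _"]) auto
    also have "\<dots> = (\<Sum>v\<in>{v\<in>C. \<not> v i}. \<rho> ^ (wt n v + 1))"
      by (rule group_count) (use fC wtle in auto)
    also have "\<dots> = (\<Sum>v\<in>{v\<in>C. \<not> v i}. \<rho> * P v)" unfolding P_def
      by (intro sum.cong refl) (simp add: wt_split[OF i] P_pow)
    finally show ?thesis unfolding X_def by (simp add: sum_distrib_left)
  qed
  have R2: "(\<Sum>k=0..n. real (A_cnt n C k) * \<rho> ^ k) = X + \<rho> * Y"
  proof -
    have "(\<Sum>k=0..n. real (A_cnt n C k) * \<rho> ^ k) = (\<Sum>v\<in>C. \<rho> ^ wt n v)"
      unfolding A_cnt_def by (rule group_count) (use fC wtle in auto)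
    also have "\<dots> = (\<Sum>v\<in>C. (if v i then \<rho> else 1) * P v)" unfolding P_def
      by (intro sum.cong refl) (simp add: wt_split[OF i] P_pow)
    also have "\<dots> = X + \<rho> * Y" unfolding X_def Y_def by (simp add: split_sum[OF fC])
    finally show ?thesis .
  qed
  have "(1 + \<rho>) / 4 * (X + \<rho> * Y) = ((1 + \<rho>) * (1 + \<rho>^2)) / 4 * X"
    using YX by (simp add: algebra_simps power2_eq_square)
  also have "\<dots> = Y" using rf YX by simp
  finally show ?thesis using L1 R1 R2 YX by simp
qed

end
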